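(* Let $p=(p_1,\dots,p_n)\in[0,1]^n$ and $y=y_1\cdots y_m\in\{0,1\}^m$ with $n\ge m>0$, and let $i\in\{1,\dots,n\}$. Then $$\mathbf F(p,y)=\mathbf F(p_{[n]\setminus\{i\}},y)+p_i\sum_{k:\,y_k=1}\mathbf F(p_{[1:i-1]},y_{[1:k-1]})\,\mathbf F(p_{[i+1:n]},y_{[k+1:m]})+(1-p_i)\sum_{k:\,y_k=0}\mathbf F(p_{[1:i-1]},y_{[1:k-1]})\,\mathbf F(p_{[i+1:n]},y_{[k+1:m]}).$$
   Context: For integers $a,b$, $[a:b]=\{a,a+1,\dots,b\}$ if $b\ge a$ and $\emptyset$ otherwise; $[a]=[1:a]$. For a vector $p$ and index set $T$, $p_T$ is the subvector of $p$ with coordinates in $T$ (in increasing order), and similarly $y_T$ for sequences; $y_{[1:0]}$ and $y_{[m+1:m]}$ are the empty sequence. The relaxed binomial coefficient $\mathbf F:[0,1]^n\times\{0,1\}^m\to\mathbb R$ is defined by: if $1\le m\le n$, $\mathbf F(p,v)=\sum_{S\subseteq[n],|S|=m}\prod_{j=1}^m p_{S_j}^{v_j}(1-p_{S_j})^{1-v_j}$, where $S_1<\dots<S_m$ are the elements of $S$; if $m=0\le n$ (including $n=0$), $\mathbf F(p,v)=1$; otherwise ($m>n$) $\mathbf F(p,v)=0$. Equivalently $\mathbf F(p,v)$ is the expected number of occurrences of $v$ as a subsequence of a random $Z\in\{0,1\}^n$ with independent $Z_i\sim\mathrm{Bernoulli}(p_i)$. *)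

theory Defs
  imports Complex_Main
begin

text \<open>Vectors p are real lists (positions 0..n-1 stand
for 1..n), binary words v are nat lists with entries in {0,1}.\<close>

definition relaxed_binom :: "real list \<Rightarrow> nat list \<Rightarrow> real" where
  "relaxed_binom p v =
     (let n = length p; m = length v in
      if 1 \<le> m \<and> m \<le> n then
        (\<Sum>S\<in>{S. S \<subseteq> {0..<n} \<and> card S = m}.
           \<Prod>j<m. (p ! (sorted_list_of_set S ! j)) ^ (v ! j)
                  * (1 - p ! (sorted_list_of_set S ! j)) ^ (1 - v ! j))
      else if m = 0 then 1 else 0)"

end

theory Submission imports Defs begin

definition w :: "real \<Rightarrow> nat \<Rightarrow> real" where "w a b = a ^ b * (1 - a) ^ (1 - b)"

definition Aset :: "nat \<Rightarrow> nat \<Rightarrow> nat set set" where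
  "Aset n m = {S. S \<subseteq> {0..<n} \<and> card S = m}"

definition fS :: "real list \<Rightarrow> nat list \<Rightarrow> nat set \<Rightarrow> real" where
  "fS p v S = (\<Prod>j<length v. w (p ! (sorted_list_of_set S ! j)) (v ! j))"

lemma finite_Aset: "finite (Aset n m)"
  unfolding Aset_def by (rule finite_subset[of _ "Pow {0..<n}"]) auto

lemma rb_sum: "relaxed_binom p v = (\<Sum>S\<in>Aset (length p) (length v). fS p v S)"
proof -
  have e: "Aset n m = {}" if "m > n" for n m
    unfolding Aset_def using that
    by (auto dest: card_mono[OF finite_atLeastLessThan])
  have z: "Aset n 0 = {{}}" for n
    unfolding Aset_def by (auto dest: finite_subset[OF _ finite_atLeastLessThan])
  show ?thesis
    unfolding relaxed_binom_def Let_def fS_def w_def Aset_def[symmetric]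
    using e z by (auto simp: not_le)
qed

lemma sl_Suc: "finite S \<Longrightarrow> sorted_list_of_set (Suc ` S) = map Suc (sorted_list_of_set S)"
  by (subst sorted_list_of_set_unique[symmetric])
     (auto simp: sorted_wrt_map card_image)

lemma sl_0Suc: "finite S \<Longrightarrow> sorted_list_of_set (insert 0 (Suc ` S)) = 0 # map Suc (sorted_list_of_set S)"
  by (subst sorted_list_of_set_unique[symmetric])
     (auto simp: sorted_wrt_map card_image card_insert_if)

lemma Aset_split: "Aset (Suc n) (Suc m) = (\<lambda>S. Suc ` S) ` Aset n (Suc m) \<union> (\<lambda>S. insert 0 (Suc ` S)) ` Aset n m"
proof (rule set_eqI, rule iffI)
  fix T assume T: "T \<in> Aset (Suc n) (Suc m)"
  define S where "S = (\<lambda>x. x - 1) ` (T - {0})"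
  have fin: "finite T" using T unfolding Aset_def by (auto intro: finite_subset)
  have TS: "T - {0} = Suc ` S"
  proof -
    have "(\<lambda>x. Suc (x - 1)) ` (T - {0}) = (\<lambda>x. x) ` (T-{0})" by (intro image_cong) auto
    then show ?thesis unfolding S_def image_image by simp
  qed
  have Ssub: "S \<subseteq> {0..<n}" using T unfolding S_def Aset_def by auto
  have cS: "card S = card (T - {0})" using TS by (simp add: card_image)
  show "T \<in> (\<lambda>S. Suc ` S) ` Aset n (Suc m) \<union> (\<lambda>S. insert 0 (Suc ` S)) ` Aset n m"
  proof (cases "0 \<in> T")
    case True
    hence "T = insert 0 (Suc ` S)" using TS by blast
    moreover have "card S = m" using cS True T fin unfolding Aset_def by (simp add: card_Diff_singleton)
    ultimately show ?thesis using Ssub unfolding Aset_def by blast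
  next
    case False
    hence "T = Suc ` S" using TS by blast
    moreover have "card S = Suc m" using cS False T unfolding Aset_def by simp
    ultimately show ?thesis using Ssub unfolding Aset_def by blast
  qed
next
  fix T assume "T \<in> (\<lambda>S. Suc ` S) ` Aset n (Suc m) \<union> (\<lambda>S. insert 0 (Suc ` S)) ` Aset n m"
  then show "T \<in> Aset (Suc n) (Suc m)"
  proof
    assume "T \<in> (\<lambda>S. Suc ` S) ` Aset n (Suc m)"
    then obtain S where "S \<in> Aset n (Suc m)" "T = Suc ` S" by blast
    then show ?thesis unfolding Aset_def by (auto simp: card_image)
  next
    assume "T \<in> (\<lambda>S. insert 0 (Suc ` S)) ` Aset n m"
    then obtain S where S: "S \<in> Aset n m" "T = insert 0 (Suc ` S)" by blast
    then have "finite S" unfolding Aset_def by (auto intro: finite_subset)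
    then show ?thesis using S unfolding Aset_def by (auto simp: card_image)
  qed
qed

lemma rb_Nil2: "relaxed_binom p [] = 1"
  unfolding relaxed_binom_def by simp

lemma rb_Nil1: "relaxed_binom [] (b # v) = 0"
  unfolding relaxed_binom_def by simp

lemma rb_Cons: "relaxed_binom (a # p) (b # v) = relaxed_binom p (b # v) + w a b * relaxed_binom p v"
proof -
  let ?n = "length p" and ?m = "length v"
  have inj1: "inj_on (\<lambda>S. Suc ` S) (Aset ?n (Suc ?m))"
    by (rule inj_onI) (simp add: inj_image_eq_iff)
  have inj2: "inj_on (\<lambda>S. insert 0 (Suc ` S)) (Aset ?n ?m)"
  proof (rule inj_onI)
    fix S T assume "insert 0 (Suc ` S) = insert 0 (Suc ` T)"
    hence "Suc ` S = Suc ` T" by (metis Diff_insert_absorb imageE nat.distinct(1))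
    thus "S = T" by (simp add: inj_image_eq_iff)
  qed
  have disj: "(\<lambda>S. Suc ` S) ` Aset ?n (Suc ?m) \<inter> (\<lambda>S. insert 0 (Suc ` S)) ` Aset ?n ?m = {}"
    by auto
  have f1: "fS (a # p) (b # v) (Suc ` S) = fS p (b # v) S" if "S \<in> Aset ?n (Suc ?m)" for S
  proof -
    have fin: "finite S" and c: "card S = Suc ?m" using that unfolding Aset_def by (auto intro: finite_subset)
    show ?thesis unfolding fS_def sl_Suc[OF fin]
      by (rule prod.cong) (use c in auto)
  qed
  have f2: "fS (a # p) (b # v) (insert 0 (Suc ` S)) = w a b * fS p v S" if "S \<in> Aset ?n ?m" for S
  proof -
    have fin: "finite S" and c: "card S = ?m" using that unfolding Aset_def by (auto intro: finite_subset)
    show ?thesis unfolding fS_def sl_0Suc[OF fin] length_Cons prod.lessThan_Suc_shift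
      apply simp
      apply (rule disjI2)
      apply (rule prod.cong)
      using c by auto
  qed
  show ?thesis
    unfolding rb_sum length_Cons Aset_split
    apply (subst sum.union_disjoint)
       apply (simp_all add: finite_Aset disj)
    apply (simp add: sum.reindex[OF inj1] sum.reindex[OF inj2] f1 f2 sum_distrib_left cong: sum.cong)
    done
qed

lemma gen: "relaxed_binom (q @ a # r) y = relaxed_binom (q @ r) y
   + (\<Sum>k<length y. w a (y!k) * relaxed_binom q (take k y) * relaxed_binom r (drop (Suc k) y))"
proof (induction q arbitrary: y)
  case Nil
  then show ?case
  proof (cases y)
    case Nil then show ?thesis by (simp add: rb_Nil2)
  next
    case (Cons b ys)
    have "(\<Sum>k<length ys. w a (ys ! k) * relaxed_binom [] (take (Suc k) y) * relaxed_binom r (drop (Suc (Suc k)) y)) = 0"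
      using Cons by (simp add: rb_Nil1)
    then show ?thesis using Cons
      by (simp only: length_Cons sum.lessThan_Suc_shift) (simp add: rb_Cons rb_Nil2)
  qed
next
  case (Cons c q)
  then show ?case
  proof (cases y)
    case Nil then show ?thesis by (simp add: rb_Nil2)
  next
    case (Cons b ys)
    have "relaxed_binom ((c # q) @ a # r) y = relaxed_binom (q @ a # r) (b # ys) + w c b * relaxed_binom (q @ a # r) ys"
      using Cons by (simp add: rb_Cons)
    also have "\<dots> = relaxed_binom (q @ r) (b # ys)
   + (\<Sum>k<length (b#ys). w a ((b#ys)!k) * relaxed_binom q (take k (b#ys)) * relaxed_binom r (drop (Suc k) (b#ys)))
   + w c b * (relaxed_binom (q @ r) ys
   + (\<Sum>k<length ys. w a (ys!k) * relaxed_binom q (take k ys) * relaxed_binom r (drop (Suc k) ys)))"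
      using Cons.IH by simp
    also have "\<dots> = relaxed_binom ((c # q) @ r) y
   + (\<Sum>k<length y. w a (y!k) * relaxed_binom (c # q) (take k y) * relaxed_binom r (drop (Suc k) y))"
      using Cons
      by (simp only: length_Cons sum.lessThan_Suc_shift)
         (simp add: rb_Cons rb_Nil2 algebra_simps sum.distrib sum_distrib_left)
    finally show ?thesis .
  qed
qed

theorem lemma1:
  fixes p :: "real list" and y :: "nat list" and i :: nat
  assumes "\<forall>x\<in>set p. 0 \<le> x \<and> x \<le> 1"
    and "set y \<subseteq> {0, 1}"
    and "length p \<ge> length y" and "length y > 0"
    and "1 \<le> i" and "i \<le> length p"
  shows "relaxed_binom p y =
           relaxed_binom (take (i - 1) p @ drop i p) y
         + p ! (i - 1) * (\<Sum>k\<in>{k\<in>{1..length y}. y ! (k - 1) = 1}.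
               relaxed_binom (take (i - 1) p) (take (k - 1) y)
             * relaxed_binom (drop i p) (drop k y))
         + (1 - p ! (i - 1)) * (\<Sum>k\<in>{k\<in>{1..length y}. y ! (k - 1) = 0}.
               relaxed_binom (take (i - 1) p) (take (k - 1) y)
             * relaxed_binom (drop i p) (drop k y))"
proof -
  define q where "q = take (i - 1) p"
  define a where "a = p ! (i - 1)"
  define r where "r = drop i p"
  define m where "m = length y"
  define h where "h k = relaxed_binom q (take (k - 1) y) * relaxed_binom r (drop k y)" for k
  have i1: "i - 1 < length p" using assms by simp
  have "p = q @ a # r" unfolding q_def a_def r_def
    using id_take_nth_drop[OF i1] assms(5) by simp
  hence "relaxed_binom p y = relaxed_binom (q @ r) y
     + (\<Sum>k<m. w a (y!k) * relaxed_binom q (take k y) * relaxed_binom r (drop (Suc k) y))"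
    unfolding m_def using gen by metis
  also have "(\<Sum>k<m. w a (y!k) * relaxed_binom q (take k y) * relaxed_binom r (drop (Suc k) y))
     = (\<Sum>k\<in>{1..m}. w a (y!(k-1)) * h k)"
  proof -
    have "{1..m} = Suc ` {..<m}" by (simp add: image_Suc_lessThan)
    then show ?thesis by (simp add: sum.reindex h_def mult.assoc)
  qed
  also have "\<dots> = (\<Sum>k\<in>{k\<in>{1..m}. y ! (k - 1) = 1}. w a (y!(k-1)) * h k)
      + (\<Sum>k\<in>{k\<in>{1..m}. y ! (k - 1) = 0}. w a (y!(k-1)) * h k)"
  proof -
    have Y: "y!(k-1) = 0 \<or> y!(k-1) = 1" if "k\<in>{1..m}" for k
    proof -
      have "y!(k-1) \<in> set y" using that unfolding m_def by (auto intro!: nth_mem)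
      then show ?thesis using assms(2) by auto
    qed
    have U: "{1..m} = {k\<in>{1..m}. y ! (k - 1) = 1} \<union> {k\<in>{1..m}. y ! (k - 1) = 0}"
      using Y by fastforce
    have D: "(\<Sum>k\<in>{k\<in>{1..m}. y ! (k - 1) = 1} \<union> {k\<in>{1..m}. y ! (k - 1) = 0}. w a (y!(k-1)) * h k)
       = (\<Sum>k\<in>{k\<in>{1..m}. y ! (k - 1) = 1}. w a (y!(k-1)) * h k)
      + (\<Sum>k\<in>{k\<in>{1..m}. y ! (k - 1) = 0}. w a (y!(k-1)) * h k)"
      by (rule sum.union_disjoint) auto
    show ?thesis using D U by metis
  qed
  also have "\<dots> = a * (\<Sum>k\<in>{k\<in>{1..m}. y ! (k - 1) = 1}. h k)
      + (1 - a) * (\<Sum>k\<in>{k\<in>{1..m}. y ! (k - 1) = 0}. h k)"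
    by (simp add: sum_distrib_left w_def)
  finally show ?thesis unfolding q_def a_def r_def m_def h_def by simp
qed

end
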